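(* Let $k=4l+3$ for a nonnegative integer $l$, and let $G$ be a $k$-uniform tight cycle (an $s$-cycle with $s=k-1$) with $n$ vertices. Then the maximum degree of $G$ is $\Delta=k$. If $n$ is even, then $\lambda(\mathcal{L})\ge\Delta+1=k+1$.
   Context: A $k$-uniform $s$-cycle with $m$ edges has vertex set $\mathbb{Z}_n$, $n=m(k-s)$ (vertex $n+i$ identified with $i$), and edges $e_j=\{j(k-s)+1,\ldots,j(k-s)+k\}$, $j=0,\ldots,m-1$; it is assumed that $n\ge 2k-s$ (for $s=k-1$: $n=m\ge k+1$). The degree $d_i$ of a vertex is the number of edges containing it. A Laplacian H-eigenvalue of $G$ is a real $\lambda$ for which there exists $\mathbf{x}\in\mathbb{R}^n\setminus\{0\}$ with $\lambda x_i^{k-1}=d_ix_i^{k-1}-\sum_{e\ni i}\prod_{j\in e\setminus\{i\}}x_j$ for all $i$ (equivalently, an H-eigenvalue of the Laplacian tensor $\mathcal{L}=\mathcal{D}-\mathcal{A}$, with $\mathcal{A}$ the adjacency tensor having entries $1/(k-1)!$ on edges and $\mathcal{D}$ the diagonal degree tensor); $\lambda(\mathcal{L})$ is the largest Laplacian H-eigenvalue. *)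

theory Defs
  imports Complex_Main
begin

definition hdegree :: "nat set set \<Rightarrow> nat \<Rightarrow> nat" where
  "hdegree E i = card {e \<in> E. i \<in> e}"

definition max_degree :: "nat \<Rightarrow> nat set set \<Rightarrow> nat" where
  "max_degree n E = Max (hdegree E ` {0..<n})"

text \<open>k-uniform s-cycle with m edges on Z_n, n = m(k-s); vertex v is represented by v mod n in {0..<n}.\<close>
definition s_cycle_edges :: "nat \<Rightarrow> nat \<Rightarrow> nat \<Rightarrow> nat set set" where
  "s_cycle_edges k s m =
     (let n = m * (k - s) in
      (\<lambda>j. (\<lambda>t. (j * (k - s) + t) mod n) ` {1..k}) ` {0..<m})"

definition tight_cycle_edges :: "nat \<Rightarrow> nat \<Rightarrow> nat set set" where
  "tight_cycle_edges k n = s_cycle_edges k (k - 1) n"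

definition is_lap_H_eigenvalue :: "nat \<Rightarrow> nat \<Rightarrow> nat set set \<Rightarrow> real \<Rightarrow> bool" where
  "is_lap_H_eigenvalue k n E lam \<longleftrightarrow>
     (\<exists>x :: nat \<Rightarrow> real. (\<exists>i<n. x i \<noteq> 0) \<and>
        (\<forall>i<n. lam * x i ^ (k - 1) =
            real (hdegree E i) * x i ^ (k - 1)
            - (\<Sum>e\<in>{e \<in> E. i \<in> e}. \<Prod>j\<in>e - {i}. x j)))"

definition lap_H_largest :: "nat \<Rightarrow> nat \<Rightarrow> nat set set \<Rightarrow> real" where
  "lap_H_largest k n E = Sup {lam. is_lap_H_eigenvalue k n E lam}"

end

theory Submission
  imports Defs
begin

definition Ed :: "nat \<Rightarrow> nat \<Rightarrow> nat \<Rightarrow> nat set" where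
  "Ed n k j = (\<lambda>t. (j+t) mod n) ` {1..k}"

lemma tc_eq: "1 \<le> k \<Longrightarrow> tight_cycle_edges k n = Ed n k ` {0..<n}"
  unfolding tight_cycle_edges_def s_cycle_edges_def Ed_def by (simp add: Let_def)

lemma shift_ne:
  fixes k n t t' j :: nat
  assumes "k < n" "t < t'" "t' \<le> k"
  shows "(j+t) mod n \<noteq> (j+t') mod n"
proof
  assume e: "(j+t) mod n = (j+t') mod n"
  have ge: "j+t' \<ge> j+t" using assms by linarith
  have "n dvd (j+t') - (j+t)" using e mod_eq_dvd_iff_nat[OF ge, of n] by simp
  moreover have "0 < (j+t') - (j+t)" using assms by linarith
  moreover have "(j+t') - (j+t) < n" using assms by linarith
  ultimately show False using nat_dvd_not_less by blast
qed

lemma inj_shift: "(k::nat) < n \<Longrightarrow> inj_on (\<lambda>t. (j+t) mod n) {1..k}"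
proof (rule inj_onI)
  fix t t' assume a: "k < n" "t \<in> {1..k}" "t' \<in> {1..k}" "(j+t) mod n = (j+t') mod n"
  show "t = t'"
  proof (rule ccontr)
    assume ne: "t \<noteq> t'"
    show False
    proof (cases "t < t'")
      case True then show False using shift_ne[of k n t t' j] a by simp
    next
      case False then have "t' < t" using ne by simp
      then show False using shift_ne[of k n t' t j] a by simp
    qed
  qed
qed

lemma card_Ed: "k < n \<Longrightarrow> card (Ed n k j) = k"
proof -
  assume a: "k < n"
  have "card ((\<lambda>t. (j+t) mod n) ` {1..k}) = card {1..k}" by (rule card_image[OF inj_shift[OF a]])
  then show ?thesis unfolding Ed_def by simp
qed

lemma Ed_sub: "0 < n \<Longrightarrow> Ed n k j \<subseteq> {0..<n}"
  by (auto simp: Ed_def)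

lemma mem_Ed_fwd:
  assumes "k < n" "j < n" "i \<in> Ed n k j"
  shows "\<exists>t\<in>{1..k}. j = (i+n-t) mod n"
proof -
  obtain t where t: "t \<in> {1..k}" "i = (j+t) mod n" using assms(3) unfolding Ed_def by auto
  have "j = (i+n-t) mod n"
  proof (cases "j + t < n")
    case True
    then have "i = j + t" using t by simp
    then show ?thesis using assms by simp
  next
    case False
    then have "i = j + t - n" using t assms by (simp add: le_mod_geq)
    then have "i + n - t = j" using False by simp
    then show ?thesis using assms by simp
  qed
  then show ?thesis using t by blast
qed

lemma mem_Ed_bwd:
  assumes "t \<in> {1..k}" "k < n" "i < n"
  shows "i \<in> Ed n k ((i+n-t) mod n)"
proof -
  have "((i+n-t) mod n + t) mod n = ((i+n-t) + t) mod n" by (simp add: mod_add_left_eq)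
  also have "\<dots> = i" using assms by simp
  finally show ?thesis unfolding Ed_def using assms(1) by (metis imageI)
qed

lemma not_self: "k < n \<Longrightarrow> j < n \<Longrightarrow> j \<notin> Ed n k j"
proof
  assume a: "k < n" "j < n" "j \<in> Ed n k j"
  then obtain s where s: "s \<in> {1..k}" "j = (j+s) mod n" unfolding Ed_def by auto
  show False
  proof (cases "j + s < n")
    case True then show False using s by simp
  next
    case False
    then have "(j+s) mod n = j + s - n" using s a by (simp add: le_mod_geq)
    then show False using s a False by simp
  qed
qed

lemma edges_at:
  assumes "k < n" "i < n"
  shows "{e \<in> Ed n k ` {0..<n}. i \<in> e} = (\<lambda>t. Ed n k ((i+n-t) mod n)) ` {1..k}"
proof
  show "{e \<in> Ed n k ` {0..<n}. i \<in> e} \<subseteq> (\<lambda>t. Ed n k ((i+n-t) mod n)) ` {1..k}"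
    using mem_Ed_fwd[OF assms(1)] by fastforce
  show "(\<lambda>t. Ed n k ((i+n-t) mod n)) ` {1..k} \<subseteq> {e \<in> Ed n k ` {0..<n}. i \<in> e}"
    using mem_Ed_bwd assms by auto
qed

lemma inj_edges_at:
  assumes "k < n" "i < n"
  shows "inj_on (\<lambda>t. Ed n k ((i+n-t) mod n)) {1..k}"
proof -
  have key: False if "t \<in> {1..k}" "t' \<in> {1..k}" "t < t'"
      "Ed n k ((i+n-t) mod n) = Ed n k ((i+n-t') mod n)" for t t'
  proof -
    have "((i+n-t') mod n + (t'-t)) mod n = ((i+n-t') + (t'-t)) mod n" by (simp add: mod_add_left_eq)
    also have "\<dots> = (i+n-t) mod n" using that assms by simp
    finally have eq: "(i+n-t) mod n = ((i+n-t') mod n + (t'-t)) mod n" by simp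
    have "t'-t \<in> {1..k}" using that by auto
    then have "(i+n-t) mod n \<in> Ed n k ((i+n-t') mod n)"
      unfolding Ed_def using eq by (intro image_eqI[where x="t'-t"]) auto
    moreover have "(i+n-t) mod n < n" using assms by simp
    then have "(i+n-t) mod n \<notin> Ed n k ((i+n-t) mod n)"
      using not_self assms(1) by blast
    ultimately show False using that by simp
  qed
  show ?thesis
  proof (rule inj_onI, rule ccontr)
    fix t t' assume h: "t \<in> {1..k}" "t' \<in> {1..k}"
      "Ed n k ((i+n-t) mod n) = Ed n k ((i+n-t') mod n)" "t \<noteq> t'"
    then consider "t < t'" | "t' < t" using linorder_neqE_nat by blast
    then show False using key[of t t'] key[of t' t] h by auto
  qed
qed

lemma hdeg:
  assumes "k < n" "i < n"
  shows "hdegree (Ed n k ` {0..<n}) i = k"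
  unfolding hdegree_def edges_at[OF assms] using card_image[OF inj_edges_at[OF assms]] by simp

lemma even_mod_even: "even (n::nat) \<Longrightarrow> even (m mod n) \<longleftrightarrow> even m"
proof -
  assume "even n"
  have "m = n * (m div n) + m mod n" by simp
  then show ?thesis using \<open>even n\<close> by (metis even_add even_mult_iff)
qed

lemma neg1_mod: "even (n::nat) \<Longrightarrow> (-1::real) ^ (m mod n) = (-1) ^ m"
  by (simp add: minus_one_power_iff even_mod_even)

lemma prod_Ed:
  assumes "even n" "k = 4*l+3" "k < n"
  shows "(\<Prod>v\<in>Ed n k j. (-1::real) ^ v) = (-1) ^ j"
proof -
  have "(\<Prod>v\<in>Ed n k j. (-1::real) ^ v) = (\<Prod>t\<in>{1..k}. (-1::real) ^ ((j+t) mod n))"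
    unfolding Ed_def by (subst prod.reindex[OF inj_shift[OF assms(3)]]) simp
  also have "\<dots> = (\<Prod>t\<in>{1..k}. (-1::real) ^ (j+t))"
    using neg1_mod[OF assms(1)] by simp
  also have "\<dots> = (-1::real) ^ (\<Sum>t\<in>{1..k}. j+t)" by (simp add: power_sum)
  also have "(\<Sum>t\<in>{1..k}. j+t) = k*j + (\<Sum>t\<in>{1..k}. t)" by (simp add: sum.distrib)
  also have "(\<Sum>t\<in>{1..k}. t) = k*(k+1) div 2"
    using gauss_sum_from_Suc_0[of k, where 'a=nat] by simp
  also have "k*(k+1) div 2 = (4*l+3)*(2*l+2)"
  proof -
    have "k*(k+1) = 2*((4*l+3)*(2*l+2))" by (simp add: assms(2) algebra_simps)
    then show ?thesis by simp
  qed
  finally have e: "(\<Prod>v\<in>Ed n k j. (-1::real) ^ v) = (-1) ^ (k * j + (4 * l + 3) * (2 * l + 2))" .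
  have "even (k * j + (4 * l + 3) * (2 * l + 2)) \<longleftrightarrow> even j" using assms(2) by simp
  then show ?thesis unfolding e by (simp add: minus_one_power_iff)
qed

lemma alt_sum: "(\<Sum>t\<in>{1..2*m+1}. (-1::real)^t) = -1"
proof (induction m)
  case 0 then show ?case by simp
next
  case (Suc m)
  have "{1..2*Suc m+1} = insert (2*m+3) (insert (2*m+2) {1..2*m+1})" by auto
  then show ?case using Suc by simp
qed

lemma term_eq:
  assumes "even n" "k = 4*l+3" "k < n" "i < n" "t \<in> {1..k}"
  shows "(\<Prod>v\<in>Ed n k ((i+n-t) mod n) - {i}. (-1::real) ^ v) = (-1) ^ t"
proof -
  define A where "A = Ed n k ((i+n-t) mod n)"
  have iA: "i \<in> A" unfolding A_def using mem_Ed_bwd assms by auto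
  have fin: "finite A" unfolding A_def Ed_def by simp
  have "(\<Prod>v\<in>A. (-1::real) ^ v) = (-1)^i * (\<Prod>v\<in>A - {i}. (-1::real) ^ v)"
    using prod.remove[OF fin iA] by simp
  then have "(\<Prod>v\<in>A - {i}. (-1::real) ^ v) = (-1)^i * (\<Prod>v\<in>A. (-1::real) ^ v)"
    by (simp add: minus_one_power_iff split: if_splits)
  also have "\<dots> = (-1)^i * (-1)^(i+n-t)"
    unfolding A_def prod_Ed[OF assms(1-3)] neg1_mod[OF assms(1)] by simp
  also have "\<dots> = (-1)^(i + (i+n-t))" by (simp add: power_add)
  also have "\<dots> = (-1)^t"
  proof -
    have "i + (i+n-t) + t = 2*i+n" using assms by auto
    then have "even (i + (i+n-t)) \<longleftrightarrow> even t" using assms(1) by (metis even_add even_mult_iff even_numeral)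
    then show ?thesis by (simp add: minus_one_power_iff)
  qed
  finally show ?thesis unfolding A_def .
qed

lemma eig:
  assumes "even n" "k = 4*l+3" "k < n"
  shows "is_lap_H_eigenvalue k n (Ed n k ` {0..<n}) (real k + 1)"
  unfolding is_lap_H_eigenvalue_def
proof (intro exI[where x="\<lambda>v. (-1::real)^v"] conjI allI impI)
  show "\<exists>i<n. (-1::real) ^ i \<noteq> 0" using assms by auto
  fix i assume i: "i < n"
  have p: "((-1::real) ^ i) ^ (k - 1) = 1"
  proof -
    have "even (i * (k-1))" using assms(2) by simp
    then show ?thesis by (simp add: power_mult[symmetric])
  qed
  have "(\<Sum>e\<in>{e \<in> Ed n k ` {0..<n}. i \<in> e}. \<Prod>j\<in>e - {i}. (-1::real) ^ j)
      = (\<Sum>t\<in>{1..k}. \<Prod>j\<in>Ed n k ((i+n-t) mod n) - {i}. (-1::real) ^ j)"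
    unfolding edges_at[OF assms(3) i] by (subst sum.reindex[OF inj_edges_at[OF assms(3) i]]) simp
  also have "\<dots> = (\<Sum>t\<in>{1..k}. (-1::real) ^ t)"
    using term_eq[OF assms i] by simp
  also have "\<dots> = -1"
  proof -
    have "{1..k} = {1..2*(2*l+1)+1}" using assms(2) by simp
    then show ?thesis using alt_sum[of "2*l+1"] by simp
  qed
  finally show "(real k + 1) * ((-1::real) ^ i) ^ (k - 1) =
         real (hdegree (Ed n k ` {0..<n}) i) * ((-1::real) ^ i) ^ (k - 1) -
         (\<Sum>e\<in>{e \<in> Ed n k ` {0..<n}. i \<in> e}. \<Prod>j\<in>e - {i}. (-1::real) ^ j)"
    using p hdeg[OF assms(3) i] by simp
qed

lemma bound:
  assumes "even (k - 1)" "0 < k" "k < n"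
    and "is_lap_H_eigenvalue k n (Ed n k ` {0..<n}) lam"
  shows "lam \<le> 2 * real k"
proof -
  obtain x i1 where i1: "i1 < n" "x i1 \<noteq> 0" and eq: "\<And>i. i < n \<Longrightarrow> lam * x i ^ (k - 1) =
            real (hdegree (Ed n k ` {0..<n}) i) * x i ^ (k - 1)
            - (\<Sum>e\<in>{e \<in> Ed n k ` {0..<n}. i \<in> e}. \<Prod>j\<in>e - {i}. x j)"
    using assms(4) unfolding is_lap_H_eigenvalue_def by blast
  define M where "M = Max ((\<lambda>i. \<bar>x i\<bar>) ` {0..<n})"
  have Mge: "\<bar>x i\<bar> \<le> M" if "i < n" for i unfolding M_def using that by (intro Max_ge) auto
  obtain i0 where i0: "i0 < n" "\<bar>x i0\<bar> = M"
  proof -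
    have "M \<in> (\<lambda>i. \<bar>x i\<bar>) ` {0..<n}" unfolding M_def using i1 by (intro Max_in) auto
    then show ?thesis using that by auto
  qed
  have Mpos: "M > 0" using Mge[OF i1(1)] i1 by linarith
  define P where "P = M ^ (k - 1)"
  have Ppos: "P > 0" unfolding P_def using Mpos by simp
  have xP: "x i0 ^ (k-1) = P" unfolding P_def i0(2)[symmetric] using power_even_abs[OF assms(1), of "x i0"] by (simp only:)
  define A where "A = {e \<in> Ed n k ` {0..<n}. i0 \<in> e}"
  have cardA: "card A = k" unfolding A_def using hdeg[OF assms(3) i0(1)] by (simp add: hdegree_def)
  have termb: "\<bar>\<Prod>j\<in>e - {i0}. x j\<bar> \<le> P" if eA: "e \<in> A" for e
  proof -
    have eA': "e \<in> Ed n k ` {0..<n}" "i0 \<in> e" using eA unfolding A_def by simp_all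
    then obtain j where j: "e = Ed n k j" by blast
    have sub: "e \<subseteq> {0..<n}" using j Ed_sub[of n k j] assms(3) by simp
    have fe: "finite e" using sub finite_subset by blast
    have "card e = k" using j card_Ed[OF assms(3)] by simp
    then have ce: "card (e - {i0}) = k - 1" using eA'(2) fe by (simp add: card_Diff_singleton)
    have "\<bar>\<Prod>j\<in>e - {i0}. x j\<bar> = (\<Prod>j\<in>e - {i0}. \<bar>x j\<bar>)" by (simp add: abs_prod)
    also have "\<dots> \<le> (\<Prod>j\<in>e - {i0}. M)"
    proof (rule prod_mono)
      fix v assume "v \<in> e - {i0}"
      then have "v < n" using sub by auto
      then show "0 \<le> \<bar>x v\<bar> \<and> \<bar>x v\<bar> \<le> M" using Mge by simp
    qed
    also have "\<dots> = P" unfolding P_def using ce by simp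
    finally show ?thesis .
  qed
  have "\<bar>\<Sum>e\<in>A. \<Prod>j\<in>e - {i0}. x j\<bar> \<le> (\<Sum>e\<in>A. \<bar>\<Prod>j\<in>e - {i0}. x j\<bar>)" by (rule sum_abs)
  also have "\<dots> \<le> (\<Sum>e\<in>A. P)" by (rule sum_mono) (use termb in auto)
  also have "\<dots> = real k * P" using cardA by simp
  finally have Sb: "\<bar>\<Sum>e\<in>A. \<Prod>j\<in>e - {i0}. x j\<bar> \<le> real k * P" .
  have "lam * P = real k * P - (\<Sum>e\<in>A. \<Prod>j\<in>e - {i0}. x j)"
    using eq[OF i0(1)] unfolding A_def xP hdeg[OF assms(3) i0(1)] .
  then have "lam * P \<le> (2 * real k) * P" using Sb by linarith
  then show ?thesis using Ppos mult_right_le_imp_le[of lam P "2 * real k"] by blast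
qed

theorem proposition8p1:
  fixes l k n :: nat
  assumes "k = 4 * l + 3"
    and "n \<ge> k + 1"
  shows "max_degree n (tight_cycle_edges k n) = k
         \<and> (even n \<longrightarrow> lap_H_largest k n (tight_cycle_edges k n) \<ge> real k + 1)"
proof -
  have kn: "k < n" using assms by simp
  have E: "tight_cycle_edges k n = Ed n k ` {0..<n}" by (rule tc_eq) (use assms in simp)
  have "hdegree (Ed n k ` {0..<n}) ` {0..<n} = {k}" using hdeg[OF kn] kn by auto
  then have p1: "max_degree n (tight_cycle_edges k n) = k" unfolding max_degree_def E by simp
  have p2: "lap_H_largest k n (tight_cycle_edges k n) \<ge> real k + 1" if ev: "even n"
  proof -
    have bdd: "bdd_above {lam. is_lap_H_eigenvalue k n (Ed n k ` {0..<n}) lam}"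
      using bound[of k n] assms kn by (intro bdd_aboveI[where M="2 * real k"]) auto
    show ?thesis unfolding lap_H_largest_def E
      by (rule cSup_upper[OF _ bdd]) (use eig[OF ev assms(1) kn] in simp)
  qed
  show ?thesis using p1 p2 by blast
qed

end
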